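(* If a path $\omega\in\Omega$ is CH-random for a computable forecasting system $\varphi$, then $\min I_\textnormal{CH}(\omega)\le\liminf_{n\to\infty}\overline{\varphi}(\omega_{1:n})$ and $\limsup_{n\to\infty}\underline{\varphi}(\omega_{1:n})\le\max I_\textnormal{CH}(\omega)$.
   Context: $\mathcal{X}=\{0,1\}$; $\Omega=\mathcal{X}^{\mathbb{N}}$ (paths); $\mathbb{S}=\bigcup_{n\ge0}\mathcal X^n$ (situations), $\omega_{1:n}=(\omega_1,\dots,\omega_n)$, $\omega_{1:0}$ the empty string. $\mathcal{I}$: nonempty closed intervals $I\subseteq[0,1]$. A forecasting system is $\varphi:\mathbb S\to\mathcal I$, $\underline\varphi=\min\varphi$, $\overline\varphi=\max\varphi$; an interval forecast $I$ is identified with the constant forecasting system $s\mapsto I$. $\varphi$ is computable if there are recursive $\underline q,\overline q:\mathbb S\times\mathbb N_0\to\mathbb Q$ with $|\underline\varphi(s)-\underline q(s,n)|<2^{-n}$ and $|\overline\varphi(s)-\overline q(s,n)|<2^{-n}$. A path $\omega$ is CH-random for $\varphi$ if for every recursive selection process $S:\mathbb S\to\{0,1\}$ with $\sum_{k=0}^{n-1}S(\omega_{1:k})\to\infty$: $\liminf_n \frac{\sum_{k<n}S(\omega_{1:k})[\omega_{k+1}-\underline\varphi(\omega_{1:k})]}{\sum_{k<n}S(\omega_{1:k})}\ge0$ and $\limsup_n \frac{\sum_{k<n}S(\omega_{1:k})[\omega_{k+1}-\overline\varphi(\omega_{1:k})]}{\sum_{k<n}S(\omega_{1:k})}\le0$.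 $\mathcal I_\textnormal{CH}(\omega)=\{I\in\mathcal I:\omega\text{ CH-random for }I\}$, $I_\textnormal{CH}(\omega)=\bigcap_{I\in\mathcal I_\textnormal{CH}(\omega)}I$. *)

theory Defs
  imports Complex_Main "HOL-Library.Extended_Real" "HOL-Library.Liminf_Limsup" "HOL-Library.Nat_Bijection"
begin

text \<open>recfn n f: f is a total recursive function of arity n; f is only meaningful
  on argument lists of length n.\<close>

inductive recfn :: "nat \<Rightarrow> (nat list \<Rightarrow> nat) \<Rightarrow> bool" where
  rf_zero: "recfn n (\<lambda>_. 0)"
| rf_succ: "recfn 1 (\<lambda>xs. Suc (hd xs))"
| rf_proj: "i < n \<Longrightarrow> recfn n (\<lambda>xs. xs ! i)"
| rf_comp: "recfn m f \<Longrightarrow> length gs = m \<Longrightarrow> (\<forall>g\<in>set gs. recfn n g) \<Longrightarrow>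
            recfn n (\<lambda>xs. f (map (\<lambda>g. g xs) gs))"
| rf_prim: "recfn n f \<Longrightarrow> recfn (Suc (Suc n)) g \<Longrightarrow>
            recfn (Suc n) (\<lambda>xs. rec_nat (f (tl xs)) (\<lambda>y r. g (y # r # tl xs)) (hd xs))"
| rf_mu: "recfn (Suc n) f \<Longrightarrow> (\<forall>xs. length xs = n \<longrightarrow> (\<exists>y. f (y # xs) = 0)) \<Longrightarrow>
          recfn n (\<lambda>xs. LEAST y. f (y # xs) = 0)"

definition enc_sit :: "bool list \<Rightarrow> nat" where
  "enc_sit s = list_encode (map of_bool s)"

text \<open>Every natural number codes a rational (surjectively).\<close>
definition dec_rat :: "nat \<Rightarrow> rat" where
  "dec_rat k = of_int (int_decode (fst (prod_decode k))) / of_nat (Suc (snd (prod_decode k)))"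

text \<open>A path is omega :: nat => bool, with omega k standing for omega_(k+1).
  omega_(1:n) is the list of the first n outcomes.\<close>
definition prefix :: "(nat \<Rightarrow> bool) \<Rightarrow> nat \<Rightarrow> bool list" where
  "prefix \<omega> n = map \<omega> [0..<n]"

definition intervals :: "real set set" where
  "intervals = {I. \<exists>a b. 0 \<le> a \<and> a \<le> b \<and> b \<le> 1 \<and> I = {a..b}}"

definition forecasting_system :: "(bool list \<Rightarrow> real set) \<Rightarrow> bool" where
  "forecasting_system \<phi> \<longleftrightarrow> (\<forall>s. \<phi> s \<in> intervals)"

definition lower :: "(bool list \<Rightarrow> real set) \<Rightarrow> bool list \<Rightarrow> real" where
  "lower \<phi> s = Inf (\<phi> s)"

definition upper :: "(bool list \<Rightarrow> real set) \<Rightarrow> bool list \<Rightarrow> real" where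
  "upper \<phi> s = Sup (\<phi> s)"

definition computable_fs :: "(bool list \<Rightarrow> real set) \<Rightarrow> bool" where
  "computable_fs \<phi> \<longleftrightarrow> (\<exists>gl gu. recfn 2 gl \<and> recfn 2 gu \<and>
     (\<forall>s n. \<bar>lower \<phi> s - real_of_rat (dec_rat (gl [enc_sit s, n]))\<bar> < 1 / 2 ^ n \<and>
            \<bar>upper \<phi> s - real_of_rat (dec_rat (gu [enc_sit s, n]))\<bar> < 1 / 2 ^ n))"

definition recursive_selection :: "(bool list \<Rightarrow> nat) \<Rightarrow> bool" where
  "recursive_selection S \<longleftrightarrow> (\<forall>s. S s \<in> {0, 1}) \<and> (\<exists>g. recfn 1 g \<and> (\<forall>s. S s = g [enc_sit s]))"

definition CH_random :: "(bool list \<Rightarrow> real set) \<Rightarrow> (nat \<Rightarrow> bool) \<Rightarrow> bool" where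
  "CH_random \<phi> \<omega> \<longleftrightarrow>
    (\<forall>S. recursive_selection S \<longrightarrow>
       filterlim (\<lambda>n. \<Sum>k<n. real (S (prefix \<omega> k))) at_top sequentially \<longrightarrow>
       (liminf (\<lambda>n. ereal ((\<Sum>k<n. real (S (prefix \<omega> k)) * (of_bool (\<omega> k) - lower \<phi> (prefix \<omega> k)))
                          / (\<Sum>k<n. real (S (prefix \<omega> k))))) \<ge> 0 \<and>
        limsup (\<lambda>n. ereal ((\<Sum>k<n. real (S (prefix \<omega> k)) * (of_bool (\<omega> k) - upper \<phi> (prefix \<omega> k)))
                          / (\<Sum>k<n. real (S (prefix \<omega> k))))) \<le> 0))"

definition I_CH_set :: "(nat \<Rightarrow> bool) \<Rightarrow> real set set" where
  "I_CH_set \<omega> = {I \<in> intervals. CH_random (\<lambda>_. I) \<omega>}"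

definition I_CH :: "(nat \<Rightarrow> bool) \<Rightarrow> real set" where
  "I_CH \<omega> = \<Inter> (I_CH_set \<omega>)"

end

theory Submission
  imports Defs
begin


definition rc :: "nat \<Rightarrow> (nat list \<Rightarrow> nat) \<Rightarrow> bool" where
  "rc n F \<longleftrightarrow> (\<exists>f. recfn n f \<and> (\<forall>xs. length xs = n \<longrightarrow> f xs = F xs))"

lemma rc_recfn: "recfn n f \<Longrightarrow> rc n f"
  unfolding rc_def by blast

lemma rc_cong: "rc n F \<Longrightarrow> (\<And>xs. length xs = n \<Longrightarrow> F xs = G xs) \<Longrightarrow> rc n G"
  unfolding rc_def by metis

lemma rc_zero: "rc n (\<lambda>_. 0)"
  by (rule rc_recfn) (rule rf_zero)

lemma rc_proj: "i < n \<Longrightarrow> rc n (\<lambda>xs. xs ! i)"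
  by (rule rc_recfn) (rule rf_proj)

lemma rc_list_choose:
  assumes "\<forall>G\<in>set Gs. rc n G"
  shows "\<exists>gs. length gs = length Gs \<and> (\<forall>g\<in>set gs. recfn n g) \<and>
     (\<forall>xs. length xs = n \<longrightarrow> map (\<lambda>g. g xs) gs = map (\<lambda>G. G xs) Gs)"
  using assms
proof (induction Gs)
  case Nil
  then show ?case by auto
next
  case (Cons G Gs)
  then obtain gs where gs: "length gs = length Gs" "\<forall>g\<in>set gs. recfn n g"
     "\<forall>xs. length xs = n \<longrightarrow> map (\<lambda>g. g xs) gs = map (\<lambda>G. G xs) Gs" by auto
  from Cons.prems obtain g where g: "recfn n g" "\<forall>xs. length xs = n \<longrightarrow> g xs = G xs"
    unfolding rc_def by auto
  show ?case
    by (rule exI[of _ "g # gs"]) (use gs g in auto)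
qed

lemma rc_comp:
  assumes "rc m F" "length Gs = m" "\<forall>G\<in>set Gs. rc n G"
  shows "rc n (\<lambda>xs. F (map (\<lambda>G. G xs) Gs))"
proof -
  obtain f where f: "recfn m f" "\<forall>xs. length xs = m \<longrightarrow> f xs = F xs"
    using assms(1) unfolding rc_def by auto
  obtain gs where gs: "length gs = length Gs" "\<forall>g\<in>set gs. recfn n g"
     "\<forall>xs. length xs = n \<longrightarrow> map (\<lambda>g. g xs) gs = map (\<lambda>G. G xs) Gs"
    using rc_list_choose[OF assms(3)] by blast
  have "recfn n (\<lambda>xs. f (map (\<lambda>g. g xs) gs))"
    by (rule rf_comp) (use f gs assms in auto)
  moreover have "\<forall>xs. length xs = n \<longrightarrow> f (map (\<lambda>g. g xs) gs) = F (map (\<lambda>G. G xs) Gs)"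
    using f gs assms(2) by auto
  ultimately show ?thesis unfolding rc_def by blast
qed

lemma rc_comp1: "rc 1 F \<Longrightarrow> rc n G \<Longrightarrow> rc n (\<lambda>xs. F [G xs])"
  using rc_comp[of 1 F "[G]" n] by simp

lemma rc_comp2: "rc 2 F \<Longrightarrow> rc n G \<Longrightarrow> rc n H \<Longrightarrow> rc n (\<lambda>xs. F [G xs, H xs])"
  using rc_comp[of 2 F "[G, H]" n] by (simp add: numeral_2_eq_2)

lemma rc_comp3: "rc 3 F \<Longrightarrow> rc n G \<Longrightarrow> rc n H \<Longrightarrow> rc n K \<Longrightarrow> rc n (\<lambda>xs. F [G xs, H xs, K xs])"
  using rc_comp[of 3 F "[G, H, K]" n] by (simp add: numeral_3_eq_3)

lemma rc_succ: "rc n G \<Longrightarrow> rc n (\<lambda>xs. Suc (G xs))"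
  using rc_comp1[OF rc_recfn[OF rf_succ], of n G] by simp

lemma rc_const: "rc n (\<lambda>_. c)"
  by (induction c) (auto intro: rc_zero rc_succ)

lemma rc_prim:
  assumes "rc n F" "rc (Suc (Suc n)) G"
  shows "rc (Suc n) (\<lambda>xs. rec_nat (F (tl xs)) (\<lambda>y r. G (y # r # tl xs)) (hd xs))"
proof -
  obtain f where f: "recfn n f" "\<forall>xs. length xs = n \<longrightarrow> f xs = F xs"
    using assms(1) unfolding rc_def by auto
  obtain g where g: "recfn (Suc (Suc n)) g" "\<forall>xs. length xs = Suc (Suc n) \<longrightarrow> g xs = G xs"
    using assms(2) unfolding rc_def by auto
  have "recfn (Suc n) (\<lambda>xs. rec_nat (f (tl xs)) (\<lambda>y r. g (y # r # tl xs)) (hd xs))"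
    by (rule rf_prim) (use f g in auto)
  moreover have "rec_nat (f (tl xs)) (\<lambda>y r. g (y # r # tl xs)) m
      = rec_nat (F (tl xs)) (\<lambda>y r. G (y # r # tl xs)) m" if "length xs = Suc n" for xs m
    using that f g by (induction m) auto
  ultimately show ?thesis unfolding rc_def by blast
qed

lemma rc_prim1:
  assumes "rc 1 F" "rc 3 G"
  shows "rc 2 (\<lambda>xs. rec_nat (F [xs!1]) (\<lambda>y r. G [y, r, xs!1]) (xs!0))"
proof -
  have "rc (Suc 1) (\<lambda>xs. rec_nat (F (tl xs)) (\<lambda>y r. G (y # r # tl xs)) (hd xs))"
    by (rule rc_prim) (use assms in \<open>auto simp: numeral_3_eq_3\<close>)
  then have "rc 2 (\<lambda>xs. rec_nat (F (tl xs)) (\<lambda>y r. G (y # r # tl xs)) (hd xs))" by (simp add: numeral_2_eq_2)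
  then show ?thesis
    by (rule rc_cong) (auto simp: numeral_2_eq_2 length_Suc_conv)
qed

lemma rc_prim0:
  assumes "rc 2 G"
  shows "rc 1 (\<lambda>xs. rec_nat c (\<lambda>y r. G [y, r]) (xs!0))"
proof -
  have "rc (Suc 0) (\<lambda>xs. rec_nat ((\<lambda>_. c) (tl xs)) (\<lambda>y r. G (y # r # tl xs)) (hd xs))"
    by (rule rc_prim) (use assms in \<open>auto simp: numeral_2_eq_2 rc_const\<close>)
  then have "rc 1 (\<lambda>xs. rec_nat c (\<lambda>y r. G (y # r # tl xs)) (hd xs))" by simp
  then show ?thesis
    by (rule rc_cong) (auto simp: length_Suc_conv)
qed

lemma rc_mu:
  assumes "rc (Suc n) F" "\<And>xs. length xs = n \<Longrightarrow> \<exists>y. F (y # xs) = 0"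
  shows "rc n (\<lambda>xs. LEAST y. F (y # xs) = 0)"
proof -
  obtain f where f: "recfn (Suc n) f" "\<forall>xs. length xs = Suc n \<longrightarrow> f xs = F xs"
    using assms(1) unfolding rc_def by auto
  have "recfn n (\<lambda>xs. LEAST y. f (y # xs) = 0)"
    by (rule rf_mu) (use f assms(2) in auto)
  moreover have "(LEAST y. f (y # xs) = 0) = (LEAST y. F (y # xs) = 0)" if "length xs = n" for xs
    using f that by auto
  ultimately show ?thesis unfolding rc_def by blast
qed

lemma rc_add2: "rc 2 (\<lambda>xs. xs!0 + xs!1)"
proof -
  have "rc 2 (\<lambda>xs. rec_nat ((\<lambda>ys. ys!0) [xs!1]) (\<lambda>y r. (\<lambda>ys. Suc (ys!1)) [y, r, xs!1]) (xs!0))"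
    by (rule rc_prim1) (auto intro!: rc_proj rc_succ)
  moreover have "rec_nat z (\<lambda>y r. Suc r) m = m + z" for z m :: nat by (induction m) auto
  ultimately show ?thesis by simp
qed

lemma rc_add: "rc n G \<Longrightarrow> rc n H \<Longrightarrow> rc n (\<lambda>xs. G xs + H xs)"
  using rc_comp2[OF rc_add2] by simp

lemma rc_mult2: "rc 2 (\<lambda>xs. xs!0 * xs!1)"
proof -
  have "rc 2 (\<lambda>xs. rec_nat ((\<lambda>ys. 0) [xs!1]) (\<lambda>y r. (\<lambda>ys. ys!1 + ys!2) [y, r, xs!1]) (xs!0))"
    by (rule rc_prim1) (auto intro!: rc_proj rc_add rc_const)
  moreover have "rec_nat 0 (\<lambda>y r. r + z) m = m * z" for z m :: nat by (induction m) auto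
  ultimately show ?thesis by simp
qed

lemma rc_mult: "rc n G \<Longrightarrow> rc n H \<Longrightarrow> rc n (\<lambda>xs. G xs * H xs)"
  using rc_comp2[OF rc_mult2] by simp

lemma rc_pred1: "rc 1 (\<lambda>xs. xs!0 - 1)"
proof -
  have "rc 1 (\<lambda>xs. rec_nat 0 (\<lambda>y r. (\<lambda>ys. ys!0) [y, r]) (xs!0))"
    by (rule rc_prim0) (auto intro!: rc_proj)
  moreover have "rec_nat 0 (\<lambda>y r. y) m = m - 1" for m :: nat by (induction m) auto
  ultimately show ?thesis by simp
qed

lemma rc_pred: "rc n G \<Longrightarrow> rc n (\<lambda>xs. G xs - 1)"
  using rc_comp1[OF rc_pred1] by simp

lemma rc_sub2: "rc 2 (\<lambda>xs. xs!1 - xs!0)"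
proof -
  have "rc 2 (\<lambda>xs. rec_nat ((\<lambda>ys. ys!0) [xs!1]) (\<lambda>y r. (\<lambda>ys. ys!1 - 1) [y, r, xs!1]) (xs!0))"
    by (rule rc_prim1) (rule rc_proj, simp, rule rc_pred[OF rc_proj], simp)
  moreover have "rec_nat z (\<lambda>y r. r - 1) m = z - m" for z m :: nat by (induction m) auto
  ultimately show ?thesis by simp
qed

lemma rc_sub: "rc n G \<Longrightarrow> rc n H \<Longrightarrow> rc n (\<lambda>xs. G xs - H xs)"
  using rc_comp2[OF rc_sub2, of n H G] by simp

lemma rc_tri1: "rc 1 (\<lambda>xs. triangle (xs!0))"
proof -
  have "rc 1 (\<lambda>xs. rec_nat 0 (\<lambda>y r. (\<lambda>ys. ys!1 + Suc (ys!0)) [y, r]) (xs!0))"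
    by (rule rc_prim0) (auto intro!: rc_proj rc_add rc_succ)
  moreover have "rec_nat 0 (\<lambda>y r. r + Suc y) m = triangle m" for m :: nat by (induction m) auto
  ultimately show ?thesis by simp
qed

lemma rc_tri: "rc n G \<Longrightarrow> rc n (\<lambda>xs. triangle (G xs))"
  using rc_comp1[OF rc_tri1] by simp

lemma rc_mod2_1: "rc 1 (\<lambda>xs. xs!0 mod 2)"
proof -
  have "rc 1 (\<lambda>xs. rec_nat 0 (\<lambda>y r. (\<lambda>ys. 1 - ys!1) [y, r]) (xs!0))"
    by (rule rc_prim0) (auto intro!: rc_proj rc_sub rc_const)
  moreover have "rec_nat 0 (\<lambda>y r. 1 - r) m = m mod 2" for m :: nat by (induction m) (auto simp: mod_Suc)
  ultimately show ?thesis by simp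
qed

lemma rc_mod2: "rc n G \<Longrightarrow> rc n (\<lambda>xs. G xs mod 2)"
  using rc_comp1[OF rc_mod2_1] by simp

lemma rc_less: "rc n G \<Longrightarrow> rc n H \<Longrightarrow> rc n (\<lambda>xs. if G xs < H xs then 1 else 0)"
proof -
  assume a: "rc n G" "rc n H"
  have "rc n (\<lambda>xs. 1 - (Suc (G xs) - H xs))"
    by (intro rc_sub rc_const rc_succ a)
  then show ?thesis by (rule rc_cong) auto
qed



definition t0 :: "nat \<Rightarrow> nat" where "t0 k = (LEAST t. Suc k - triangle (Suc t) = 0)"
definition da :: "nat \<Rightarrow> nat" where "da k = k - triangle (t0 k)"
definition db :: "nat \<Rightarrow> nat" where "db k = t0 k - da k"

lemma triangle_mono: "m \<le> n \<Longrightarrow> triangle m \<le> triangle n"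
  by (induction n) (auto simp: le_Suc_eq)

lemma le_triangle: "n \<le> triangle n"
  by (induction n) auto

lemma prod_decode_da_db: "prod_decode k = (da k, db k)"
proof -
  obtain a b where ab: "prod_decode k = (a, b)" by fastforce
  have k: "k = triangle (a + b) + a"
    using prod_decode_inverse[of k] ab by (simp add: prod_encode_def)
  have "t0 k = a + b"
    unfolding t0_def
  proof (rule Least_equality)
    show "Suc k - triangle (Suc (a + b)) = 0" using k by simp
  next
    fix t assume "Suc k - triangle (Suc t) = 0"
    hence "Suc k \<le> triangle (Suc t)" by simp
    show "a + b \<le> t"
    proof (rule ccontr)
      assume "\<not> a + b \<le> t"
      hence "triangle (Suc t) \<le> triangle (a + b)" by (intro triangle_mono) simp
      with \<open>Suc k \<le> triangle (Suc t)\<close> k show False by simp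
    qed
  qed
  then show ?thesis using ab k by (simp add: da_def db_def)
qed

lemma rc_t0: "rc n G \<Longrightarrow> rc n (\<lambda>xs. t0 (G xs))"
proof -
  assume G: "rc n G"
  have F: "rc 2 (\<lambda>ys. Suc (ys!1) - triangle (Suc (ys!0)))"
    by (intro rc_sub rc_succ rc_tri rc_proj) auto
  have "rc 1 (\<lambda>xs. LEAST y. (\<lambda>ys. Suc (ys!1) - triangle (Suc (ys!0))) (y # xs) = 0)"
  proof (rule rc_mu)
    show "rc (Suc 1) (\<lambda>ys. Suc (ys!1) - triangle (Suc (ys!0)))" using F by (simp add: numeral_2_eq_2)
  next
    fix xs :: "nat list" assume "length xs = 1"
    show "\<exists>y. (\<lambda>ys. Suc (ys!1) - triangle (Suc (ys!0))) (y # xs) = 0"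
      by (rule exI[of _ "xs!0"]) (use le_triangle[of "Suc (xs!0)"] in simp)
  qed
  hence "rc 1 (\<lambda>xs. t0 (xs!0))" by (simp add: t0_def)
  from rc_comp1[OF this G] show ?thesis by simp
qed

lemma rc_da: "rc n G \<Longrightarrow> rc n (\<lambda>xs. da (G xs))"
  unfolding da_def by (intro rc_sub rc_tri rc_t0)

lemma rc_db: "rc n G \<Longrightarrow> rc n (\<lambda>xs. db (G xs))"
  unfolding db_def by (intro rc_sub rc_da rc_t0)

definition chi :: "nat \<Rightarrow> nat \<Rightarrow> nat \<Rightarrow> nat" where
  "chi u v k = 1 - (1 - da k mod 2) * (1 - (if da k * v < 2 * u * Suc (db k) then 1 else 0))"

lemma rc_chi: "rc n G \<Longrightarrow> rc n (\<lambda>xs. chi u v (G xs))"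
  unfolding chi_def
  by (intro rc_sub rc_const rc_mult rc_mod2 rc_da rc_db rc_less rc_succ)

lemma chi_eq:
  assumes "0 < u" "0 < v"
  shows "chi u v k = (if dec_rat k < of_nat u / of_nat v then 1 else 0)"
proof -
  have dr: "dec_rat k = of_int (int_decode (da k)) / of_nat (Suc (db k))"
    unfolding dec_rat_def prod_decode_da_db by simp
  show ?thesis
  proof (cases "even (da k)")
    case True
    then obtain h where h: "da k = 2 * h" by blast
    have id: "int_decode (da k) = int h" using h
      by (simp add: int_decode_def sum_decode_def)
    have "(of_int (int h) / of_nat (Suc (db k)) < (of_nat u / of_nat v :: rat))
        \<longleftrightarrow> of_nat h * of_nat v < (of_nat u * of_nat (Suc (db k)) :: rat)"
      using assms by (simp add: divide_simps del: of_nat_Suc)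
    also have "\<dots> \<longleftrightarrow> h * v < u * Suc (db k)" by (simp only: of_nat_mult[symmetric] of_nat_less_iff)
    also have "\<dots> \<longleftrightarrow> da k * v < 2 * u * Suc (db k)"
    proof -
      have e1: "da k * v = 2 * (h * v)" using h by simp
      have e2: "2 * u * Suc (db k) = 2 * (u * Suc (db k))" by simp
      show ?thesis unfolding e1 e2 by linarith
    qed
    finally show ?thesis using True unfolding dr id chi_def by auto
  next
    case False
    have id: "int_decode (da k) < 0" using False
      by (simp add: int_decode_def sum_decode_def)
    have "(of_int (int_decode (da k)) / of_nat (Suc (db k)) :: rat) < 0"
      using id by (simp add: divide_neg_pos del: of_nat_Suc)
    also have "0 < (of_nat u / of_nat v :: rat)" using assms by simp
    finally show ?thesis using False unfolding dr chi_def by (auto simp: odd_iff_mod_2_eq_one)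
  qed
qed

lemma sel_lt:
  assumes g: "recfn 2 g" and uv: "0 < u" "0 < v"
  shows "recursive_selection (\<lambda>s. if real_of_rat (dec_rat (g [enc_sit s, N])) < real u / real v then 1 else 0)"
proof -
  have "rc 1 (\<lambda>xs. chi u v (g [xs!0, N]))"
    by (intro rc_chi rc_comp2[OF rc_recfn[OF g]] rc_proj rc_const) simp
  then obtain f where f: "recfn 1 f" "\<forall>xs. length xs = 1 \<longrightarrow> f xs = chi u v (g [xs!0, N])"
    unfolding rc_def by blast
  have eq: "(real_of_rat q < real u / real v) = (q < of_nat u / of_nat v)" for q
    by (metis of_rat_less of_rat_divide of_rat_of_nat_eq)
  show ?thesis unfolding recursive_selection_def
    by (rule conjI, simp, rule exI[of _ f]) (use f chi_eq[OF uv] eq in auto)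
qed

lemma sel_ge:
  assumes g: "recfn 2 g" and uv: "0 < u" "0 < v"
  shows "recursive_selection (\<lambda>s. if real_of_rat (dec_rat (g [enc_sit s, N])) < real u / real v then 0 else 1)"
proof -
  have "rc 1 (\<lambda>xs. 1 - chi u v (g [xs!0, N]))"
    by (intro rc_sub rc_const rc_chi rc_comp2[OF rc_recfn[OF g]] rc_proj) simp
  then obtain f where f: "recfn 1 f" "\<forall>xs. length xs = 1 \<longrightarrow> f xs = 1 - chi u v (g [xs!0, N])"
    unfolding rc_def by blast
  have eq: "(real_of_rat q < real u / real v) = (q < of_nat u / of_nat v)" for q
    by (metis of_rat_less of_rat_divide of_rat_of_nat_eq)
  show ?thesis unfolding recursive_selection_def
    by (rule conjI, simp, rule exI[of _ f]) (use f chi_eq[OF uv] eq in auto)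
qed

lemma sel_one: "recursive_selection (\<lambda>s. 1)"
proof -
  obtain f where f: "recfn 1 f" "\<forall>xs. length xs = 1 \<longrightarrow> f xs = 1"
    using rc_const[of 1 1] unfolding rc_def by blast
  show ?thesis unfolding recursive_selection_def using f by auto
qed



definition cnt :: "(bool list \<Rightarrow> nat) \<Rightarrow> (nat \<Rightarrow> bool) \<Rightarrow> nat \<Rightarrow> real" where
  "cnt S \<omega> = (\<lambda>n. \<Sum>k<n. real (S (prefix \<omega> k)))"

definition avg :: "(bool list \<Rightarrow> nat) \<Rightarrow> (nat \<Rightarrow> bool) \<Rightarrow> (nat \<Rightarrow> real) \<Rightarrow> nat \<Rightarrow> real" where
  "avg S \<omega> x = (\<lambda>n. (\<Sum>k<n. real (S (prefix \<omega> k)) * (of_bool (\<omega> k) - x k)) / (\<Sum>k<n. real (S (prefix \<omega> k))))"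

lemma CH_randomD:
  assumes "CH_random \<phi> \<omega>" "recursive_selection S" "filterlim (cnt S \<omega>) at_top sequentially"
  shows "liminf (\<lambda>n. ereal (avg S \<omega> (\<lambda>k. lower \<phi> (prefix \<omega> k)) n)) \<ge> 0"
    "limsup (\<lambda>n. ereal (avg S \<omega> (\<lambda>k. upper \<phi> (prefix \<omega> k)) n)) \<le> 0"
  using assms unfolding CH_random_def cnt_def avg_def by blast+

lemma contra:
  assumes S01: "\<forall>s. S s \<in> {0, 1}"
    and div: "filterlim (cnt S \<omega>) at_top sequentially"
    and l1: "liminf (\<lambda>n. ereal (avg S \<omega> x n)) \<ge> 0"
    and l2: "limsup (\<lambda>n. ereal (avg S \<omega> y n)) \<le> 0"
    and sep: "\<And>k. S (prefix \<omega> k) = 1 \<Longrightarrow> y k + \<delta> \<le> x k"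
    and d: "\<delta> > 0"
  shows False
proof -
  have ev1: "eventually (\<lambda>n. cnt S \<omega> n > 0) sequentially"
    using div by (simp add: filterlim_at_top_dense)
  have "ereal (-\<delta>/2) < liminf (\<lambda>n. ereal (avg S \<omega> x n))" 
  proof -
    have "ereal (-\<delta>/2) < 0" using d by simp
    then show ?thesis using l1 by (rule order.strict_trans2)
  qed
  hence ev2: "eventually (\<lambda>n. avg S \<omega> x n > -\<delta>/2) sequentially"
    by (auto dest: less_LiminfD)
  have "eventually (\<lambda>n. ereal (\<delta>/2) \<le> ereal (avg S \<omega> y n)) sequentially"
    using ev1 ev2
  proof eventually_elim
    case (elim n)
    let ?s = "\<lambda>k. real (S (prefix \<omega> k))"
    have trm: "?s k * (of_bool (\<omega> k) - y k) \<ge> ?s k * (of_bool (\<omega> k) - x k) + \<delta> * ?s k" for k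
    proof (cases "S (prefix \<omega> k) = 1")
      case True then show ?thesis using sep[OF True] by simp
    next
      case False then have "S (prefix \<omega> k) = 0" using S01 by blast
      then show ?thesis by simp
    qed
    have "(\<Sum>k<n. ?s k * (of_bool (\<omega> k) - x k)) + \<delta> * cnt S \<omega> n
        = (\<Sum>k<n. ?s k * (of_bool (\<omega> k) - x k) + \<delta> * ?s k)"
      by (simp add: sum.distrib sum_distrib_left cnt_def)
    also have "\<dots> \<le> (\<Sum>k<n. ?s k * (of_bool (\<omega> k) - y k))"
      by (rule sum_mono) (rule trm)
    finally have "((\<Sum>k<n. ?s k * (of_bool (\<omega> k) - x k)) + \<delta> * cnt S \<omega> n) / cnt S \<omega> n
       \<le> (\<Sum>k<n. ?s k * (of_bool (\<omega> k) - y k)) / cnt S \<omega> n"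
      using elim(1) by (simp add: divide_right_mono)
    hence "avg S \<omega> y n \<ge> avg S \<omega> x n + \<delta>"
      using elim(1) by (simp add: avg_def cnt_def add_divide_distrib)
    then show ?case using elim(2) by simp
  qed
  hence "ereal (\<delta>/2) \<le> limsup (\<lambda>n. ereal (avg S \<omega> y n))"
    by (intro le_Limsup) auto
  hence "ereal (\<delta>/2) \<le> 0" using l2 by (rule order.trans)
  with d show False by simp
qed

lemma diverge:
  assumes S01: "\<forall>s. S s \<in> {0, 1}" and inf: "infinite {k. S (prefix \<omega> k) = 1}"
  shows "filterlim (cnt S \<omega>) at_top sequentially"
  unfolding filterlim_at_top
proof
  fix Z :: real
  obtain B where B: "B \<subseteq> {k. S (prefix \<omega> k) = 1}" "finite B" "card B = nat \<lceil>Z\<rceil>"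
    using infinite_arbitrarily_large[OF inf] by blast
  obtain n0 where n0: "B \<subseteq> {..<n0}"
    using B(2) finite_nat_bounded by blast
  show "eventually (\<lambda>n. Z \<le> cnt S \<omega> n) sequentially"
    unfolding eventually_sequentially
  proof (intro exI allI impI)
    fix n assume "n0 \<le> n"
    hence Bn: "B \<subseteq> {..<n}" using n0 by auto
    have "Z \<le> real (card B)" using B(3) by linarith
    also have "\<dots> = (\<Sum>k\<in>B. real (S (prefix \<omega> k)))"
    proof -
      have "(\<Sum>k\<in>B. real (S (prefix \<omega> k))) = (\<Sum>k\<in>B. 1)" using B(1) by (intro sum.cong) auto
      then show ?thesis by simp
    qed
    also have "\<dots> \<le> (\<Sum>k<n. real (S (prefix \<omega> k)))"
      by (rule sum_mono2) (use Bn in auto)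
    finally show "Z \<le> cnt S \<omega> n" by (simp add: cnt_def)
  qed
qed

lemma intervalsD:
  assumes "I \<in> intervals"
  shows "I = {Inf I..Sup I}" "0 \<le> Inf I" "Inf I \<le> Sup I" "Sup I \<le> 1"
  using assms unfolding intervals_def by auto

lemma lower_const: "lower (\<lambda>_. I) s = Inf I" by (simp add: lower_def)
lemma upper_const: "upper (\<lambda>_. I) s = Sup I" by (simp add: upper_def)

lemma I_CH_pairwise:
  assumes "I \<in> I_CH_set \<omega>" "J \<in> I_CH_set \<omega>"
  shows "Inf I \<le> Sup J"
proof (rule ccontr)
  assume a: "\<not> Inf I \<le> Sup J"
  have div: "filterlim (cnt (\<lambda>s. 1) \<omega>) at_top sequentially"
    by (simp add: cnt_def filterlim_real_sequentially)
  have r1: "CH_random (\<lambda>_. I) \<omega>" "CH_random (\<lambda>_. J) \<omega>" using assms by (auto simp: I_CH_set_def)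
  show False
    by (rule contra[of "\<lambda>s. 1" \<omega> "\<lambda>k. Inf I" "\<lambda>k. Sup J" "Inf I - Sup J"])
      (use CH_randomD(1)[OF r1(1) sel_one div] CH_randomD(2)[OF r1(2) sel_one div] a div
       in \<open>auto simp: lower_const upper_const\<close>)
qed

lemma full_in: "{0..1} \<in> I_CH_set \<omega>"
proof -
  have "{0..1::real} \<in> intervals" unfolding intervals_def by (intro CollectI exI[of _ 0] exI[of _ 1]) auto
  moreover have "CH_random (\<lambda>_. {0..1}) \<omega>"
    unfolding CH_random_def lower_const upper_const
  proof (intro allI impI conjI)
    fix S :: "bool list \<Rightarrow> nat"
    show "0 \<le> liminf (\<lambda>n. ereal ((\<Sum>k<n. real (S (prefix \<omega> k)) * (of_bool (\<omega> k) - Inf {0..1::real})) /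
                           (\<Sum>k<n. real (S (prefix \<omega> k)))))"
      by (rule Liminf_bounded, rule always_eventually) (auto intro!: divide_nonneg_nonneg sum_nonneg)
    show "limsup (\<lambda>n. ereal ((\<Sum>k<n. real (S (prefix \<omega> k)) * (of_bool (\<omega> k) - Sup {0..1::real})) /
                           (\<Sum>k<n. real (S (prefix \<omega> k))))) \<le> 0"
      by (rule Limsup_bounded, rule always_eventually) (auto intro!: divide_nonpos_nonneg sum_nonpos sum_nonneg mult_nonneg_nonpos)
  qed
  ultimately show ?thesis by (simp add: I_CH_set_def)
qed



lemma rat_pos_nat:
  assumes "c \<in> \<rat>" "0 < c"
  obtains u v :: nat where "0 < u" "0 < v" "c = real u / real v"
proof -
  obtain i :: int and n :: nat where c: "c = real_of_int i / real n" "n \<noteq> 0"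
    using assms(1) unfolding Rats_eq_int_div_nat by blast
  have "0 < i" using assms(2) c by (simp add: zero_less_divide_iff)
  then show ?thesis using c by (intro that[of "nat i" n]) auto
qed

lemma intervals_mem: "I \<in> intervals \<Longrightarrow> x \<in> I \<longleftrightarrow> Inf I \<le> x \<and> x \<le> Sup I"
  using intervalsD(1)[of I] by (metis atLeastAtMost_iff)

lemma small_pow: "0 < (e::real) \<Longrightarrow> \<exists>N. 1 / 2 ^ N < e"
  using real_arch_pow_inv[of e "1/2"] by (auto simp: power_one_over)

lemma frequently_infinite: "frequently P sequentially \<Longrightarrow> infinite {k. P k}"
  by (simp add: cofinite_eq_sequentially[symmetric] frequently_cofinite)

theorem proposition14:
  fixes \<phi> :: "bool list \<Rightarrow> real set" and \<omega> :: "nat \<Rightarrow> bool"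
  assumes "forecasting_system \<phi>" and "computable_fs \<phi>" and "CH_random \<phi> \<omega>"
  shows "ereal (Inf (I_CH \<omega>)) \<le> liminf (\<lambda>n. ereal (upper \<phi> (prefix \<omega> n)))
       \<and> limsup (\<lambda>n. ereal (lower \<phi> (prefix \<omega> n))) \<le> ereal (Sup (I_CH \<omega>))"
proof -
  define C where "C = I_CH_set \<omega>"
  define X where "X = I_CH \<omega>"
  have XC: "X = \<Inter> C" by (simp add: X_def C_def I_CH_def)
  have Cne: "C \<noteq> {}" using full_in[of \<omega>] by (auto simp: C_def)
  have Cint: "I \<in> intervals" if "I \<in> C" for I using that by (simp add: C_def I_CH_set_def)
  have Crand: "CH_random (\<lambda>_. I) \<omega>" if "I \<in> C" for I using that by (simp add: C_def I_CH_set_def)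
  have pw: "Inf I \<le> Sup J" if "I \<in> C" "J \<in> C" for I J
    using I_CH_pairwise that by (simp add: C_def)
  define m where "m = Sup (Inf ` C)"
  define M where "M = Inf (Sup ` C)"
  have bddI: "bdd_above (Inf ` C)"
  proof (rule bdd_aboveI[of _ 1])
    fix x assume "x \<in> Inf ` C"
    then obtain I where "I \<in> C" "x = Inf I" by blast
    then show "x \<le> 1" using intervalsD(3,4)[OF Cint[of I]] by linarith
  qed
  have bddS: "bdd_below (Sup ` C)"
  proof (rule bdd_belowI[of _ 0])
    fix x assume "x \<in> Sup ` C"
    then obtain I where "I \<in> C" "x = Sup I" by blast
    then show "0 \<le> x" using intervalsD(2,3)[OF Cint[of I]] by linarith
  qed
  have mX: "m \<in> X" unfolding XC
  proof
    fix I assume I: "I \<in> C"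
    have "Inf I \<le> m" unfolding m_def using I bddI by (intro cSup_upper) auto
    moreover have "m \<le> Sup I" unfolding m_def using Cne pw I by (intro cSup_least) auto
    ultimately show "m \<in> I" using intervals_mem[OF Cint[OF I]] by blast
  qed
  have MX: "M \<in> X" unfolding XC
  proof
    fix I assume I: "I \<in> C"
    have "M \<le> Sup I" unfolding M_def using I bddS by (intro cInf_lower) auto
    moreover have "Inf I \<le> M" unfolding M_def using Cne pw I by (intro cInf_greatest) auto
    ultimately show "M \<in> I" using intervals_mem[OF Cint[OF I]] by blast
  qed
  obtain I0 where I0: "I0 \<in> C" using Cne by blast
  have "X \<subseteq> I0" using I0 unfolding XC by blast
  also have "I0 \<subseteq> {0..1}"
    using intervalsD(2,4)[OF Cint[OF I0]] intervals_mem[OF Cint[OF I0]] by auto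
  finally have X01: "X \<subseteq> {0..1}" .
  have bX: "bdd_below X" using X01 by (intro bdd_belowI[of _ 0]) auto
  have aX: "bdd_above X" using X01 by (intro bdd_aboveI[of _ 1]) auto
  have InfX: "Inf X \<le> m" using mX bX by (rule cInf_lower)
  have SupX: "M \<le> Sup X" using MX aX by (rule cSup_upper)
  have M0: "0 \<le> M" using MX X01 by auto
  have phiI: "\<phi> s \<in> intervals" for s using assms(1) by (simp add: forecasting_system_def)
  have U01: "0 \<le> upper \<phi> s" "upper \<phi> s \<le> 1" for s
    using intervalsD(2,3,4)[OF phiI[of s]] unfolding upper_def by auto
  have L01: "0 \<le> lower \<phi> s" "lower \<phi> s \<le> 1" for s
    using intervalsD(2,3,4)[OF phiI[of s]] unfolding lower_def by auto
  obtain gl gu where g: "recfn 2 gl" "recfn 2 gu"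
    and apx: "\<And>s n. \<bar>lower \<phi> s - real_of_rat (dec_rat (gl [enc_sit s, n]))\<bar> < 1 / 2 ^ n"
             "\<And>s n. \<bar>upper \<phi> s - real_of_rat (dec_rat (gu [enc_sit s, n]))\<bar> < 1 / 2 ^ n"
    using assms(2) unfolding computable_fs_def by blast
  define U where "U = (\<lambda>k. upper \<phi> (prefix \<omega> k))"
  define L where "L = (\<lambda>k. lower \<phi> (prefix \<omega> k))"

  have part1: "ereal (Inf X) \<le> liminf (\<lambda>n. ereal (U n))"
  proof (rule ccontr)
    assume "\<not> ?thesis"
    hence lt: "liminf (\<lambda>n. ereal (U n)) < ereal (Inf X)" by simp
    have lge: "0 \<le> liminf (\<lambda>n. ereal (U n))"
      by (rule Liminf_bounded, rule always_eventually) (simp add: U_def U01)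
    obtain l0 where l0: "liminf (\<lambda>n. ereal (U n)) = ereal l0"
      using lt lge by (cases "liminf (\<lambda>n. ereal (U n))") auto
    have l0pos: "0 \<le> l0" "l0 < Inf X" using lt lge l0 by auto
    obtain c where c: "c \<in> \<rat>" "l0 < c" "c < Inf X" using Rats_dense_in_real[OF l0pos(2)] by blast
    obtain u v :: nat where uv: "0 < u" "0 < v" "c = real u / real v"
      using rat_pos_nat[OF c(1)] c(2) l0pos(1) by (metis le_less_trans)
    define \<epsilon> where "\<epsilon> = min (c - l0) (Inf X - c) / 2"
    have e1: "\<epsilon> \<le> (c - l0) / 2" "\<epsilon> \<le> (Inf X - c) / 2" "0 < \<epsilon>"
      using c unfolding \<epsilon>_def by (auto simp: min_def)
    have \<epsilon>: "0 < \<epsilon>" "l0 < c - \<epsilon>" "c + \<epsilon> < Inf X" using e1 c(2,3) by auto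
    obtain N where N: "1 / 2 ^ N < \<epsilon>" using small_pow[OF \<epsilon>(1)] by blast
    define S where "S = (\<lambda>s. if real_of_rat (dec_rat (gu [enc_sit s, N])) < real u / real v then 1 else (0::nat))"
    have rs: "recursive_selection S" unfolding S_def by (rule sel_lt[OF g(2) uv(1,2)])
    have S01: "\<forall>s. S s \<in> {0, 1}" by (simp add: S_def)
    have "\<not> ereal (c - \<epsilon>) \<le> liminf (\<lambda>n. ereal (U n))" using l0 \<epsilon> by simp
    then obtain y where y: "y < ereal (c - \<epsilon>)" "\<not> eventually (\<lambda>n. y < ereal (U n)) sequentially"
      unfolding le_Liminf_iff by blast
    have "frequently (\<lambda>n. \<not> y < ereal (U n)) sequentially" using y(2) by (simp add: not_eventually)
    hence "frequently (\<lambda>n. U n < c - \<epsilon>) sequentially"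
    proof (rule frequently_elim1)
      fix n assume "\<not> y < ereal (U n)"
      hence "ereal (U n) \<le> y" by simp
      hence "ereal (U n) < ereal (c - \<epsilon>)" using y(1) by (rule le_less_trans)
      thus "U n < c - \<epsilon>" by simp
    qed
    hence "infinite {k. U k < c - \<epsilon>}" by (rule frequently_infinite)
    moreover have "{k. U k < c - \<epsilon>} \<subseteq> {k. S (prefix \<omega> k) = 1}"
    proof safe
      fix k assume "U k < c - \<epsilon>"
      then show "S (prefix \<omega> k) = 1"
        using apx(2)[of "prefix \<omega> k" N] N uv(3) unfolding S_def U_def by (auto simp: abs_less_iff)
    qed
    ultimately have "infinite {k. S (prefix \<omega> k) = 1}" by (rule infinite_super[rotated])
    hence div: "filterlim (cnt S \<omega>) at_top sequentially" using diverge S01 by blast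
    have le: "Inf I \<le> c + \<epsilon>" if I: "I \<in> C" for I
    proof (rule ccontr)
      assume a: "\<not> Inf I \<le> c + \<epsilon>"
      show False
      proof (rule contra[OF S01 div _ _ _, of "\<lambda>k. Inf I" U "Inf I - (c + \<epsilon>)"])
        show "0 \<le> liminf (\<lambda>n. ereal (avg S \<omega> (\<lambda>k. Inf I) n))"
          using CH_randomD(1)[OF Crand[OF I] rs div] by (simp add: lower_const)
        show "limsup (\<lambda>n. ereal (avg S \<omega> U n)) \<le> 0"
          using CH_randomD(2)[OF assms(3) rs div] by (simp add: U_def)
        fix k assume "S (prefix \<omega> k) = 1"
        then show "U k + (Inf I - (c + \<epsilon>)) \<le> Inf I"
          using apx(2)[of "prefix \<omega> k" N] N uv(3) unfolding S_def U_def
          by (auto simp: abs_less_iff split: if_splits)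
      qed (use a in auto)
    qed
    have "m \<le> c + \<epsilon>" unfolding m_def using Cne le by (intro cSup_least) auto
    with InfX \<epsilon> show False by linarith
  qed

  have part2: "limsup (\<lambda>n. ereal (L n)) \<le> ereal (Sup X)"
  proof (rule ccontr)
    assume "\<not> ?thesis"
    hence lt: "ereal (Sup X) < limsup (\<lambda>n. ereal (L n))" by simp
    have lle: "limsup (\<lambda>n. ereal (L n)) \<le> 1"
      by (rule Limsup_bounded, rule always_eventually) (simp add: L_def L01)
    obtain l0 where l0: "limsup (\<lambda>n. ereal (L n)) = ereal l0"
      using lt lle by (cases "limsup (\<lambda>n. ereal (L n))") auto
    have l0pos: "Sup X < l0" using lt l0 by auto
    have SX0: "0 \<le> Sup X" using SupX M0 by linarith
    obtain c where c: "c \<in> \<rat>" "Sup X < c" "c < l0" using Rats_dense_in_real[OF l0pos] by blast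
    obtain u v :: nat where uv: "0 < u" "0 < v" "c = real u / real v"
      using rat_pos_nat[OF c(1)] c(2) SX0 by (metis le_less_trans)
    define \<epsilon> where "\<epsilon> = min (c - Sup X) (l0 - c) / 2"
    have e1: "\<epsilon> \<le> (c - Sup X) / 2" "\<epsilon> \<le> (l0 - c) / 2" "0 < \<epsilon>"
      using c unfolding \<epsilon>_def by (auto simp: min_def)
    have \<epsilon>: "0 < \<epsilon>" "c + \<epsilon> < l0" "Sup X < c - \<epsilon>" using e1 c(2,3) by auto
    obtain N where N: "1 / 2 ^ N < \<epsilon>" using small_pow[OF \<epsilon>(1)] by blast
    define S where "S = (\<lambda>s. if real_of_rat (dec_rat (gl [enc_sit s, N])) < real u / real v then 0 else (1::nat))"
    have rs: "recursive_selection S" unfolding S_def by (rule sel_ge[OF g(1) uv(1,2)])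
    have S01: "\<forall>s. S s \<in> {0, 1}" by (simp add: S_def)
    have "\<not> limsup (\<lambda>n. ereal (L n)) \<le> ereal (c + \<epsilon>)" using l0 \<epsilon> by simp
    then obtain y where y: "ereal (c + \<epsilon>) < y" "\<not> eventually (\<lambda>n. ereal (L n) < y) sequentially"
      unfolding Limsup_le_iff by blast
    have "frequently (\<lambda>n. \<not> ereal (L n) < y) sequentially" using y(2) by (simp add: not_eventually)
    hence "frequently (\<lambda>n. c + \<epsilon> < L n) sequentially"
    proof (rule frequently_elim1)
      fix n assume "\<not> ereal (L n) < y"
      hence "y \<le> ereal (L n)" by simp
      hence "ereal (c + \<epsilon>) < ereal (L n)" using y(1) by (rule order.strict_trans2[rotated])
      thus "c + \<epsilon> < L n" by simp
    qed
    hence "infinite {k. c + \<epsilon> < L k}" by (rule frequently_infinite)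
    moreover have "{k. c + \<epsilon> < L k} \<subseteq> {k. S (prefix \<omega> k) = 1}"
    proof safe
      fix k assume "c + \<epsilon> < L k"
      then show "S (prefix \<omega> k) = 1"
        using apx(1)[of "prefix \<omega> k" N] N uv(3) unfolding S_def L_def by (auto simp: abs_less_iff)
    qed
    ultimately have "infinite {k. S (prefix \<omega> k) = 1}" by (rule infinite_super[rotated])
    hence div: "filterlim (cnt S \<omega>) at_top sequentially" using diverge S01 by blast
    have ge: "c - \<epsilon> \<le> Sup I" if I: "I \<in> C" for I
    proof (rule ccontr)
      assume a: "\<not> c - \<epsilon> \<le> Sup I"
      show False
      proof (rule contra[OF S01 div _ _ _, of L "\<lambda>k. Sup I" "c - \<epsilon> - Sup I"])
        show "0 \<le> liminf (\<lambda>n. ereal (avg S \<omega> L n))"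
          using CH_randomD(1)[OF assms(3) rs div] by (simp add: L_def)
        show "limsup (\<lambda>n. ereal (avg S \<omega> (\<lambda>k. Sup I) n)) \<le> 0"
          using CH_randomD(2)[OF Crand[OF I] rs div] by (simp add: upper_const)
        fix k assume "S (prefix \<omega> k) = 1"
        then show "Sup I + (c - \<epsilon> - Sup I) \<le> L k"
          using apx(1)[of "prefix \<omega> k" N] N uv(3) unfolding S_def L_def
          by (auto simp: abs_less_iff split: if_splits)
      qed (use a in auto)
    qed
    have "c - \<epsilon> \<le> M" unfolding M_def using Cne ge by (intro cInf_greatest) auto
    with SupX \<epsilon> show False by linarith
  qed
  show ?thesis using part1 part2 by (simp add: X_def U_def L_def)
qed

end
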